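(* Let $\mathbb{T}$ be a time scale, $t_0\in\mathbb{T}$, $b,c:\mathbb{T}\to[0,\infty)$, $x_0>0$, $y_0>0$, $z_0\ge0$, and let $(x,y,z)$ be a solution of $$x^{\Delta}=-\frac{b(t)\,x\,y^{\sigma}}{x+y},\qquad y^{\Delta}=\frac{b(t)\,x\,y^{\sigma}}{x+y}-c(t)\,y^{\sigma},\qquad z^{\Delta}=c(t)\,y^{\sigma},$$ with $x,y:\mathbb{T}\to(0,\infty)$, $z:\mathbb{T}\to[0,\infty)$, $x(t_0)=x_0$, $y(t_0)=y_0$, $z(t_0)=z_0$. If $c(t)\ge b(t)$ for all $t\in\mathbb{T}$, or $\frac{x_0}{x_0+y_0}b(t)\le c(t)\le b(t)$ for all $t\in\mathbb{T}$, then $y$ is decreasing, i.e. $y^{\Delta}(t)\le0$ for all $t$. If $\frac{x_0}{x_0+y_0}b(t_0)\ge c(t_0)$, then $y^{\Delta}(t_0)\ge0$.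
   Context: A time scale $\mathbb{T}$ is a nonempty closed subset of $\mathbb{R}$. $\sigma(t)=\inf\{s\in\mathbb{T}:s>t\}$, $f^{\sigma}=f\circ\sigma$. $f^{\Delta}$ is the delta (Hilger) derivative: for every $\varepsilon>0$ there is $\delta>0$ with $|f(\sigma(t))-f(s)-f^{\Delta}(t)(\sigma(t)-s)|\le\varepsilon|\sigma(t)-s|$ for $s\in(t-\delta,t+\delta)\cap\mathbb{T}$. *)

theory Defs
  imports "HOL-Analysis.Analysis"
begin

definition time_scale :: "real set \<Rightarrow> bool" where
  "time_scale T \<longleftrightarrow> T \<noteq> {} \<and> closed T"

text \<open>Forward jump operator; convention inf of the empty set = sup T, i.e. sigma (max T) = max T.\<close>
definition ts_sigma :: "real set \<Rightarrow> real \<Rightarrow> real" where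
  "ts_sigma T t = (if \<exists>s\<in>T. s > t then Inf {s\<in>T. s > t} else t)"

definition has_delta_derivative :: "real set \<Rightarrow> (real \<Rightarrow> real) \<Rightarrow> real \<Rightarrow> real \<Rightarrow> bool" where
  "has_delta_derivative T f D t \<longleftrightarrow>
     (\<forall>\<epsilon>>0. \<exists>\<delta>>0. \<forall>s\<in>T. \<bar>s - t\<bar> < \<delta> \<longrightarrow>
        \<bar>f (ts_sigma T t) - f s - D * (ts_sigma T t - s)\<bar> \<le> \<epsilon> * \<bar>ts_sigma T t - s\<bar>)"

end

theory Submission imports Defs begin

lemma sigma_props:
  assumes "closed T" "t \<in> T"
  shows "ts_sigma T t \<in> T" "ts_sigma T t \<ge> t"
    "\<And>s. s \<in> T \<Longrightarrow> s > t \<Longrightarrow> ts_sigma T t \<le> s"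
proof -
  show "ts_sigma T t \<in> T"
  proof (cases "\<exists>s\<in>T. s > t")
    case True
    hence ne: "{s\<in>T. s > t} \<noteq> {}" by auto
    have bb: "bdd_below {s\<in>T. s > t}" by (rule bdd_belowI[of _ t]) auto
    have "Inf {s\<in>T. s > t} \<in> closure {s\<in>T. s > t}" by (rule closure_contains_Inf[OF ne bb])
    also have "\<dots> \<subseteq> T" using assms(1) by (simp add: closure_minimal)
    finally show ?thesis using True by (simp add: ts_sigma_def)
  qed (simp add: ts_sigma_def assms)
  show "ts_sigma T t \<ge> t"
  proof (cases "\<exists>s\<in>T. s > t")
    case True
    hence ne: "{s\<in>T. s > t} \<noteq> {}" by auto
    have "t \<le> Inf {s\<in>T. s > t}" by (rule cInf_greatest[OF ne]) auto
    then show ?thesis using True by (simp add: ts_sigma_def)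
  qed (simp add: ts_sigma_def)
  fix s assume s: "s \<in> T" "s > t"
  have bb: "bdd_below {s\<in>T. s > t}" by (rule bdd_belowI[of _ t]) auto
  have "Inf {s\<in>T. s > t} \<le> s" by (rule cInf_lower) (use s bb in auto)
  then show "ts_sigma T t \<le> s" using s by (auto simp: ts_sigma_def)
qed

lemma sigma_dense:
  assumes "closed T" "t \<in> T" "ts_sigma T t = t" "s1 \<in> T" "s1 > t" "e > 0"
  shows "\<exists>s\<in>T. t < s \<and> s < t + e"
proof -
  have ex: "\<exists>s\<in>T. s > t" using assms by auto
  hence ne: "{s\<in>T. s > t} \<noteq> {}" by auto
  have "Inf {s\<in>T. s > t} < t + e" using assms ex by (simp add: ts_sigma_def)
  then obtain s where "s \<in> {s\<in>T. s > t}" "s < t + e" using cInf_lessD[OF ne] by blast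
  then show ?thesis by auto
qed

lemma delta_step:
  assumes "has_delta_derivative T f D t" "t \<in> T"
  shows "f (ts_sigma T t) = f t + (ts_sigma T t - t) * D"
proof -
  define E where "E = \<bar>f (ts_sigma T t) - f t - D * (ts_sigma T t - t)\<bar>"
  define m where "m = \<bar>ts_sigma T t - t\<bar>"
  have all: "\<forall>e>0. E \<le> e * m"
  proof (intro allI impI)
    fix e :: real assume "e > 0"
    then obtain d where "d > 0" "\<forall>s\<in>T. \<bar>s - t\<bar> < d \<longrightarrow>
        \<bar>f (ts_sigma T t) - f s - D * (ts_sigma T t - s)\<bar> \<le> e * \<bar>ts_sigma T t - s\<bar>"
      using assms(1) unfolding has_delta_derivative_def by blast
    then show "E \<le> e * m" using assms(2) unfolding E_def m_def by auto
  qed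
  have "E \<le> 0"
  proof (rule ccontr)
    assume "\<not> E \<le> 0"
    hence Ep: "E > 0" by simp
    have m0: "m \<ge> 0" by (simp add: m_def)
    have "E / (m + 1) > 0" using Ep m0 by simp
    hence "E \<le> E / (m + 1) * m" using all by blast
    also have "\<dots> < E" using Ep m0 by (simp add: field_simps)
    finally show False by simp
  qed
  then show ?thesis unfolding E_def by (simp add: algebra_simps)
qed

lemma delta_cont:
  assumes "has_delta_derivative T f D t" "t \<in> T"
  shows "continuous (at t within T) f"
proof -
  define \<mu> where "\<mu> = ts_sigma T t - t"
  have "\<forall>e>0. \<exists>d>0. \<forall>s\<in>T. dist s t < d \<longrightarrow> dist (f s) (f t) < e"
  proof (intro allI impI)
    fix e :: real assume e: "e > 0"
    define \<epsilon> where "\<epsilon> = e / (2 * (2 * \<bar>\<mu>\<bar> + 1))"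
    have \<epsilon>: "\<epsilon> > 0" using e by (simp add: \<epsilon>_def)
    then obtain d where d: "d > 0" "\<forall>s\<in>T. \<bar>s - t\<bar> < d \<longrightarrow>
        \<bar>f (ts_sigma T t) - f s - D * (ts_sigma T t - s)\<bar> \<le> \<epsilon> * \<bar>ts_sigma T t - s\<bar>"
      using assms(1) unfolding has_delta_derivative_def by blast
    define d' where "d' = min d (min 1 (e / (2 * (\<bar>D\<bar> + 1))))"
    have d': "d' > 0" using d e by (simp add: d'_def)
    have "\<forall>s\<in>T. \<bar>s - t\<bar> < d' \<longrightarrow> \<bar>f s - f t\<bar> < e"
    proof (intro ballI impI)
      fix s assume s: "s \<in> T" "\<bar>s - t\<bar> < d'"
      have e1: "\<bar>f (ts_sigma T t) - f s - D * (ts_sigma T t - s)\<bar> \<le> \<epsilon> * \<bar>ts_sigma T t - s\<bar>"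
        using d s by (auto simp: d'_def)
      have e2: "\<bar>f (ts_sigma T t) - f t - D * (ts_sigma T t - t)\<bar> \<le> \<epsilon> * \<bar>ts_sigma T t - t\<bar>"
        using d assms(2) by auto
      have eq: "f s - f t = (f (ts_sigma T t) - f t - D * (ts_sigma T t - t))
          - (f (ts_sigma T t) - f s - D * (ts_sigma T t - s)) + D * (s - t)"
        by (simp add: algebra_simps)
      have "\<bar>ts_sigma T t - s\<bar> \<le> \<bar>\<mu>\<bar> + \<bar>s - t\<bar>" unfolding \<mu>_def by simp
      hence "\<epsilon> * \<bar>ts_sigma T t - s\<bar> \<le> \<epsilon> * (\<bar>\<mu>\<bar> + 1)"
        using \<epsilon> s(2) by (intro mult_left_mono) (auto simp: d'_def)
      moreover have "\<epsilon> * \<bar>ts_sigma T t - t\<bar> = \<epsilon> * \<bar>\<mu>\<bar>" by (simp add: \<mu>_def)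
      moreover have "\<epsilon> * (\<bar>\<mu>\<bar> + 1) + \<epsilon> * \<bar>\<mu>\<bar> \<le> e / 2"
      proof -
        have "\<epsilon> * (\<bar>\<mu>\<bar> + 1) + \<epsilon> * \<bar>\<mu>\<bar> = \<epsilon> * (2 * \<bar>\<mu>\<bar> + 1)" by algebra
        also have "\<dots> = e / 2" unfolding \<epsilon>_def
          by (metis (no_types) abs_ge_zero add_nonneg_pos mult_nonneg_nonneg nonzero_mult_div_cancel_left order.strict_iff_not times_divide_eq_right zero_less_numeral zero_less_one divide_divide_eq_left mult.commute)
        finally show ?thesis by simp
      qed
      moreover have "\<bar>D * (s - t)\<bar> < e / 2"
      proof -
        have "\<bar>D * (s - t)\<bar> = \<bar>D\<bar> * \<bar>s - t\<bar>" by (simp add: abs_mult)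
        also have "\<dots> \<le> (\<bar>D\<bar> + 1) * \<bar>s - t\<bar>" by (simp add: mult_right_mono)
        also have "\<dots> < (\<bar>D\<bar> + 1) * (e / (2 * (\<bar>D\<bar> + 1)))"
          using s(2) by (intro mult_strict_left_mono) (auto simp: d'_def)
        also have "\<dots> = e / 2" by (simp add: field_simps)
        finally show ?thesis .
      qed
      ultimately show "\<bar>f s - f t\<bar> < e" using e1 e2 eq by linarith
    qed
    then show "\<exists>d>0. \<forall>s\<in>T. dist s t < d \<longrightarrow> dist (f s) (f t) < e"
      using d' by (auto simp: dist_real_def)
  qed
  then show ?thesis by (simp add: continuous_within_eps_delta)
qed

lemma delta_dense_deriv:
  assumes "has_delta_derivative T f D t" "ts_sigma T t = t"
  shows "(f has_real_derivative D) (at t within T)"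
proof -
  have "\<forall>e>0. \<exists>d>0. \<forall>y\<in>T. norm (y - t) < d \<longrightarrow> norm (f y - f t - (y - t) * D) \<le> e * norm (y - t)"
  proof (intro allI impI)
    fix e :: real assume "e > 0"
    then obtain d where d: "d > 0" "\<forall>s\<in>T. \<bar>s - t\<bar> < d \<longrightarrow>
        \<bar>f (ts_sigma T t) - f s - D * (ts_sigma T t - s)\<bar> \<le> e * \<bar>ts_sigma T t - s\<bar>"
      using assms(1) unfolding has_delta_derivative_def by blast
    have "\<forall>y\<in>T. norm (y - t) < d \<longrightarrow> norm (f y - f t - (y - t) * D) \<le> e * norm (y - t)"
    proof (intro ballI impI)
      fix y assume y: "y \<in> T" "norm (y - t) < d"
      have "\<bar>f t - f y - D * (t - y)\<bar> \<le> e * \<bar>t - y\<bar>" using d y assms(2) by auto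
      then show "norm (f y - f t - (y - t) * D) \<le> e * norm (y - t)"
        by (simp add: abs_minus_commute algebra_simps)
    qed
    then show "\<exists>d>0. \<forall>y\<in>T. norm (y - t) < d \<longrightarrow> norm (f y - f t - (y - t) * D) \<le> e * norm (y - t)"
      using d by blast
  qed
  then show ?thesis unfolding has_field_derivative_def has_derivative_within_alt
    by (simp add: mult.commute[of D] bounded_linear_mult_right)
qed

lemma ts_mono:
  fixes f :: "real \<Rightarrow> real"
  assumes cl: "closed T" and t0: "t0 \<in> T" and ge: "\<forall>t\<in>T. t0 \<le> t"
    and cont: "continuous_on T f"
    and scat: "\<forall>t\<in>T. ts_sigma T t > t \<longrightarrow> f (ts_sigma T t) \<le> f t"
    and dens: "\<forall>t\<in>T. ts_sigma T t = t \<longrightarrow> (\<exists>D\<le>0. (f has_real_derivative D) (at t within T))"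
  shows "\<forall>t\<in>T. f t \<le> f t0"
proof (rule ccontr)
  assume "\<not> (\<forall>t\<in>T. f t \<le> f t0)"
  then obtain t1 where t1: "t1 \<in> T" "f t1 > f t0" by force
  have "t1 \<noteq> t0" using t1 by auto
  moreover have "t0 \<le> t1" using ge t1(1) by blast
  ultimately have t1g: "t1 > t0" by simp
  define \<epsilon> where "\<epsilon> = (f t1 - f t0) / (2 * (t1 - t0))"
  have \<epsilon>: "\<epsilon> > 0" using t1 t1g by (simp add: \<epsilon>_def)
  define P where "P r \<longleftrightarrow> f r \<le> f t0 + \<epsilon> * (r - t0)" for r
  have notP1: "\<not> P t1"
  proof -
    have "\<epsilon> * (t1 - t0) = (f t1 - f t0) / 2" using t1g by (simp add: \<epsilon>_def field_simps)
    then show ?thesis using t1 by (simp add: P_def)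
  qed
  define S where "S = {s\<in>T. s \<le> t1 \<and> (\<forall>r\<in>T. r \<le> s \<longrightarrow> P r)}"
  have t0S: "t0 \<in> S"
  proof -
    have "\<forall>r\<in>T. r \<le> t0 \<longrightarrow> P r"
    proof (intro ballI impI)
      fix r assume "r \<in> T" "r \<le> t0"
      moreover have "t0 \<le> r" using ge \<open>r \<in> T\<close> by blast
      ultimately have "r = t0" by simp
      then show "P r" by (simp add: P_def)
    qed
    then show ?thesis using t0 t1g by (simp add: S_def)
  qed
  have neS: "S \<noteq> {}" using t0S by auto
  have bdS: "bdd_above S" by (rule bdd_aboveI[of _ t1]) (auto simp: S_def)
  define m where "m = Sup S"
  have mcl: "m \<in> closure S" unfolding m_def by (rule closure_contains_Sup[OF neS bdS])
  have Ssub: "S \<subseteq> {r\<in>T. f r \<le> f t0 + \<epsilon> * (r - t0)}" by (auto simp: S_def P_def)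
  have clP: "closed {r\<in>T. f r \<le> f t0 + \<epsilon> * (r - t0)}"
    by (rule continuous_on_closed_Collect_le[OF cont _ cl]) (intro continuous_intros)
  have "m \<in> {r\<in>T. f r \<le> f t0 + \<epsilon> * (r - t0)}"
    using mcl closure_minimal[OF Ssub clP] by blast
  hence mT: "m \<in> T" and Pm: "P m" by (auto simp: P_def)
  have upper: "\<And>s. s \<in> S \<Longrightarrow> s \<le> m" unfolding m_def using bdS by (simp add: cSup_upper)
  have mle: "m \<le> t1" unfolding m_def by (rule cSup_least[OF neS]) (auto simp: S_def)
  have below: "\<forall>r\<in>T. r \<le> m \<longrightarrow> P r"
  proof (intro ballI impI)
    fix r assume r: "r \<in> T" "r \<le> m"
    show "P r"
    proof (cases "r = m")
      case True then show ?thesis using Pm by simp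
    next
      case False
      hence "r < m" using r by simp
      then obtain s where "s \<in> S" "r < s" using less_cSupE[OF _ neS] unfolding m_def by blast
      then have "\<forall>r'\<in>T. r' \<le> s \<longrightarrow> P r'" by (simp add: S_def)
      then show ?thesis using r \<open>r < s\<close> by simp
    qed
  qed
  have mlt: "m < t1"
  proof (rule ccontr)
    assume "\<not> m < t1"
    hence "m = t1" using mle by simp
    then show False using notP1 Pm by simp
  qed
  have sT: "ts_sigma T m \<in> T" and sge: "ts_sigma T m \<ge> m"
    and slow: "\<And>s. s \<in> T \<Longrightarrow> s > m \<Longrightarrow> ts_sigma T m \<le> s"
    using sigma_props[OF cl mT] by auto
  have sle: "ts_sigma T m \<le> t1" using slow[OF t1(1) mlt] .
  show False
  proof (cases "ts_sigma T m > m")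
    case True
    have "\<epsilon> * (m - t0) \<le> \<epsilon> * (ts_sigma T m - t0)" using \<epsilon> sge by (intro mult_left_mono) auto
    moreover have "f (ts_sigma T m) \<le> f m" using scat mT True by blast
    ultimately have Ps: "P (ts_sigma T m)" using Pm unfolding P_def by linarith
    have "\<forall>r\<in>T. r \<le> ts_sigma T m \<longrightarrow> P r"
    proof (intro ballI impI)
      fix r assume r: "r \<in> T" "r \<le> ts_sigma T m"
      show "P r"
      proof (cases "r \<le> m")
        case True then show ?thesis using below r by blast
      next
        case False
        hence "ts_sigma T m \<le> r" using slow r by simp
        hence "r = ts_sigma T m" using r by simp
        then show ?thesis using Ps by simp
      qed
    qed
    hence "ts_sigma T m \<in> S" using sT sle by (simp add: S_def)
    hence "ts_sigma T m \<le> m" by (rule upper)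
    then show False using True by simp
  next
    case False
    hence sm: "ts_sigma T m = m" using sge by simp
    then obtain D where D: "D \<le> 0" "(f has_real_derivative D) (at m within T)" using dens mT by blast
    have "\<forall>e>0. \<exists>d>0. \<forall>y\<in>T. norm (y - m) < d \<longrightarrow> norm (f y - f m - D * (y - m)) \<le> e * norm (y - m)"
      using D(2) unfolding has_field_derivative_def has_derivative_within_alt by simp
    then obtain d where d: "d > 0" "\<forall>y\<in>T. norm (y - m) < d \<longrightarrow> norm (f y - f m - D * (y - m)) \<le> \<epsilon> * norm (y - m)"
      using \<epsilon> by blast
    obtain s where s: "s \<in> T" "m < s" "s < m + min d (t1 - m)"
    proof -
      have "min d (t1 - m) > 0" using d mlt by simp
      from sigma_dense[OF cl mT sm t1(1) mlt this] show ?thesis using that by blast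
    qed
    have "\<forall>r\<in>T. r \<le> s \<longrightarrow> P r"
    proof (intro ballI impI)
      fix r assume r: "r \<in> T" "r \<le> s"
      show "P r"
      proof (cases "r \<le> m")
        case True then show ?thesis using below r by auto
      next
        case False
        hence "norm (r - m) < d" using r s by auto
        hence "norm (f r - f m - D * (r - m)) \<le> \<epsilon> * norm (r - m)" using d r by blast
        hence "\<bar>f r - f m - D * (r - m)\<bar> \<le> \<epsilon> * \<bar>r - m\<bar>" by simp
        moreover have "D * (r - m) \<le> 0" using False D by (simp add: mult_nonpos_nonneg)
        moreover have "\<bar>r - m\<bar> = r - m" using False by simp
        ultimately have "f r \<le> f m + \<epsilon> * (r - m)" by linarith
        then show ?thesis using Pm unfolding P_def by (simp add: algebra_simps)
      qed
    qed
    hence "s \<in> S" using s by (simp add: S_def)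
    hence "s \<le> m" by (rule upper)
    then show False using s by simp
  qed
qed

theorem theorem28:
  fixes T :: "real set" and t0 x0 y0 z0 :: real
    and b c x y z xD yD zD :: "real \<Rightarrow> real"
  defines "T0 \<equiv> {t \<in> T. t0 \<le> t}"
  assumes ts: "time_scale T" and t0: "t0 \<in> T"
    and b_nonneg: "\<forall>t\<in>T. b t \<ge> 0" and c_nonneg: "\<forall>t\<in>T. c t \<ge> 0"
    and x0: "x0 > 0" and y0: "y0 > 0" and z0: "z0 \<ge> 0"
    and x_pos: "\<forall>t\<in>T0. x t > 0" and y_pos: "\<forall>t\<in>T0. y t > 0" and z_nonneg: "\<forall>t\<in>T0. z t \<ge> 0"
    and init: "x t0 = x0" "y t0 = y0" "z t0 = z0"
    and dx: "\<forall>t\<in>T0. has_delta_derivative T0 x (xD t) t"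
    and dy: "\<forall>t\<in>T0. has_delta_derivative T0 y (yD t) t"
    and dz: "\<forall>t\<in>T0. has_delta_derivative T0 z (zD t) t"
    and eqx: "\<forall>t\<in>T0. xD t = - (b t * x t * y (ts_sigma T0 t)) / (x t + y t)"
    and eqy: "\<forall>t\<in>T0. yD t = b t * x t * y (ts_sigma T0 t) / (x t + y t) - c t * y (ts_sigma T0 t)"
    and eqz: "\<forall>t\<in>T0. zD t = c t * y (ts_sigma T0 t)"
  shows "(((\<forall>t\<in>T. c t \<ge> b t) \<or>
          (\<forall>t\<in>T. x0 / (x0 + y0) * b t \<le> c t \<and> c t \<le> b t))
           \<longrightarrow> (\<forall>t\<in>T0. yD t \<le> 0)) \<and>
         (x0 / (x0 + y0) * b t0 \<ge> c t0 \<longrightarrow> yD t0 \<ge> 0)"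
proof -
  have T0sub: "T0 \<subseteq> T" by (auto simp: T0_def)
  have clT0: "closed T0"
  proof -
    have "T0 = T \<inter> {t0..}" by (auto simp: T0_def)
    then show ?thesis using ts by (auto simp: time_scale_def intro: closed_Int)
  qed
  have t0T0: "t0 \<in> T0" using t0 by (simp add: T0_def)
  have geT0: "\<forall>t\<in>T0. t0 \<le> t" by (simp add: T0_def)
  have sT0: "\<And>t. t \<in> T0 \<Longrightarrow> ts_sigma T0 t \<in> T0" using sigma_props(1)[OF clT0] by blast
  have Ysp: "\<And>t. t \<in> T0 \<Longrightarrow> y (ts_sigma T0 t) > 0" using sT0 y_pos by blast
  have yDf: "\<And>t. t \<in> T0 \<Longrightarrow> yD t = y (ts_sigma T0 t) * (b t * x t / (x t + y t) - c t)"
    using eqy by (simp add: algebra_simps)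
  have part1: "\<forall>t\<in>T0. yD t \<le> 0" if H: "(\<forall>t\<in>T. c t \<ge> b t) \<or>
          (\<forall>t\<in>T. x0 / (x0 + y0) * b t \<le> c t \<and> c t \<le> b t)"
  proof (cases "\<forall>t\<in>T. c t \<ge> b t")
    case True
    show ?thesis
    proof
      fix t assume t: "t \<in> T0"
      have X: "x t > 0" "y t > 0" using t x_pos y_pos by auto
      have "x t / (x t + y t) \<le> 1" using X by simp
      hence "b t * (x t / (x t + y t)) \<le> b t * 1" using b_nonneg t T0sub
        by (intro mult_left_mono) auto
      moreover have "b t \<le> c t" using True t T0sub by blast
      ultimately have "b t * x t / (x t + y t) - c t \<le> 0" by simp
      then show "yD t \<le> 0" using yDf[OF t] Ysp[OF t] by (simp add: mult_nonneg_nonpos)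
    qed
  next
    case False
    hence H2: "\<forall>t\<in>T. x0 / (x0 + y0) * b t \<le> c t \<and> c t \<le> b t" using H by blast
    have ccont: "\<And>f fD. \<forall>t\<in>T0. has_delta_derivative T0 f (fD t) t \<Longrightarrow> continuous_on T0 f"
      using delta_cont unfolding continuous_on_eq_continuous_within by blast
    have cu: "continuous_on T0 (\<lambda>t. x t / y t)"
      using ccont[OF dx] ccont[OF dy] y_pos by (intro continuous_on_divide) auto
    have scat: "\<forall>t\<in>T0. ts_sigma T0 t > t \<longrightarrow> x (ts_sigma T0 t) / y (ts_sigma T0 t) \<le> x t / y t"
    proof (intro ballI impI)
      fix t assume t: "t \<in> T0" and gt: "ts_sigma T0 t > t"
      define \<mu> where "\<mu> = ts_sigma T0 t - t"
      define X where "X = x t"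
      define Y where "Y = y t"
      define Ys where "Ys = y (ts_sigma T0 t)"
      define Xs where "Xs = x (ts_sigma T0 t)"
      have pos: "X > 0" "Y > 0" "Ys > 0" "\<mu> > 0" using t x_pos y_pos Ysp[OF t] gt
        by (auto simp: X_def Y_def Ys_def \<mu>_def)
      have cb: "c t \<le> b t" using H2 t T0sub by auto
      have ex: "Xs = X + \<mu> * (- (b t * X * Ys) / (X + Y))"
        using delta_step[of T0 x "xD t" t] dx eqx t by (simp add: X_def Y_def Ys_def Xs_def \<mu>_def mult.commute)
      have ey: "Ys = Y + \<mu> * (b t * X * Ys / (X + Y) - c t * Ys)"
        using delta_step[of T0 y "yD t" t] dy eqy t by (simp add: X_def Y_def Ys_def \<mu>_def mult.commute)
      define q where "q = b t * X * Ys / (X + Y)"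
      have q: "q * (X + Y) = b t * X * Ys" using pos by (simp add: q_def)
      have ex': "Xs = X - \<mu> * q" using ex unfolding q_def by simp
      have e1: "Xs * Y = X * Y - \<mu> * q * Y" unfolding ex' by (simp add: algebra_simps)
      have ey': "Ys = Y + \<mu> * (q - c t * Ys)" using ey unfolding q_def by (simp add: right_diff_distrib)
      have "X * Ys = X * (Y + \<mu> * (q - c t * Ys))" using ey' by simp
      hence e2: "X * Ys = X * Y + \<mu> * q * X - \<mu> * c t * X * Ys" by (simp add: algebra_simps)
      have "Xs * Y - X * Ys = - \<mu> * (q * (X + Y)) + \<mu> * c t * X * Ys"
        using e1 e2 by (simp add: algebra_simps)
      also have "\<dots> = \<mu> * X * Ys * (c t - b t)" unfolding q by (simp add: algebra_simps)
      also have "\<dots> \<le> 0" using pos cb by (simp add: mult_nonneg_nonpos)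
      finally have "Xs * Y \<le> X * Ys" by simp
      then show "x (ts_sigma T0 t) / y (ts_sigma T0 t) \<le> x t / y t"
        using pos by (simp add: X_def Y_def Ys_def Xs_def divide_simps mult.commute)
    qed
    have dens: "\<forall>t\<in>T0. ts_sigma T0 t = t \<longrightarrow> (\<exists>D\<le>0. ((\<lambda>t. x t / y t) has_real_derivative D) (at t within T0))"
    proof (intro ballI impI)
      fix t assume t: "t \<in> T0" and sm: "ts_sigma T0 t = t"
      have X: "x t > 0" "y t > 0" using t x_pos y_pos by auto
      have cb: "c t \<le> b t" using H2 t T0sub by auto
      have d1: "(x has_real_derivative xD t) (at t within T0)" using delta_dense_deriv dx t sm by blast
      have d2: "(y has_real_derivative yD t) (at t within T0)" using delta_dense_deriv dy t sm by blast
      have "((\<lambda>t. x t / y t) has_real_derivative (xD t * y t - x t * yD t) / (y t * y t)) (at t within T0)"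
        using DERIV_divide[OF d1 d2] X by simp
      moreover have "(xD t * y t - x t * yD t) / (y t * y t) \<le> 0"
      proof -
        have xd: "xD t = - (b t * x t * y t) / (x t + y t)" using eqx t sm by simp
        have yd: "yD t = b t * x t * y t / (x t + y t) - c t * y t" using eqy t sm by simp
        define r where "r = b t * x t * y t / (x t + y t)"
        have r: "r * (x t + y t) = b t * x t * y t" using X by (simp add: r_def)
        have xd': "xD t = - r" using xd by (simp add: r_def)
        have yd': "yD t = r - c t * y t" using yd by (simp add: r_def)
        have "xD t * y t - x t * yD t = - (r * (x t + y t)) + x t * y t * c t"
          unfolding xd' yd' by (simp add: algebra_simps)
        also have "\<dots> = x t * y t * (c t - b t)" unfolding r by (simp add: algebra_simps)
        finally have "xD t * y t - x t * yD t = x t * y t * (c t - b t)" .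
        also have "\<dots> \<le> 0" using X cb by (simp add: mult_nonneg_nonpos)
        finally show ?thesis by (simp add: divide_nonpos_pos X)
      qed
      ultimately show "\<exists>D\<le>0. ((\<lambda>t. x t / y t) has_real_derivative D) (at t within T0)" by blast
    qed
    have mono: "\<forall>t\<in>T0. x t / y t \<le> x t0 / y t0"
      by (rule ts_mono[OF clT0 t0T0 geT0 cu scat dens])
    show ?thesis
    proof
      fix t assume t: "t \<in> T0"
      have X: "x t > 0" "y t > 0" using t x_pos y_pos by auto
      have "x t / y t \<le> x0 / y0" using mono t init by simp
      hence "x t * y0 \<le> x0 * y t" using X x0 y0 by (simp add: divide_simps mult.commute)
      hence "x t * (x0 + y0) \<le> x0 * (x t + y t)" by (simp add: algebra_simps)
      hence "x t / (x t + y t) \<le> x0 / (x0 + y0)" using X x0 y0 by (simp add: divide_simps mult.commute)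
      hence "b t * (x t / (x t + y t)) \<le> b t * (x0 / (x0 + y0))" using b_nonneg t T0sub
        by (intro mult_left_mono) auto
      moreover have "x0 / (x0 + y0) * b t \<le> c t" using H2 t T0sub by blast
      ultimately have "b t * x t / (x t + y t) - c t \<le> 0" by (simp add: mult.commute)
      then show "yD t \<le> 0" using yDf[OF t] Ysp[OF t] by (simp add: mult_nonneg_nonpos)
    qed
  qed
  have part2: "yD t0 \<ge> 0" if H: "x0 / (x0 + y0) * b t0 \<ge> c t0"
  proof -
    have "b t0 * x t0 / (x t0 + y t0) - c t0 \<ge> 0" using H init by (simp add: mult.commute)
    then show ?thesis using yDf[OF t0T0] Ysp[OF t0T0] by simp
  qed
  show ?thesis using part1 part2 by blast
qed

end
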